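(* Fix $\alpha>0$, and let $h:[0,\infty)\to[0,\infty)$ be an increasing function with $h(t)\to\infty$ as $t\to\infty$ such that, for some $\rho\in(0,c_1)$, $\log h(t)<\rho\,(\alpha\wedge1)\log\log t$ for all sufficiently large $t$, where $$c_1:=\int_0^1\frac{\min\{2s,2-2s\}}{s+(\mathrm{e}-1)^{-1}}\,\mathrm{d}s\approx 0.480156 .$$ Then there exists a random variable $X$ taking values in $[1,\infty)$, whose tail function $t\mapsto\mathbb{P}(X\ge t)$ is log-convex on $[1,\infty)$, satisfying $\mathbb{E}[X^p]\le\frac{C}{\alpha-p}$ for all $p\in(0,\alpha)$ and some constant $C>0$, and such that $$\limsup_{t\to\infty}\frac{t^\alpha\,\mathbb{P}(X\ge t)}{h(t)}\ge1.$$
   Context: $\alpha\wedge1=\min(\alpha,1)$. A positive function $f$ is log-convex on an interval if $\log f$ is convex there. *)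

theory Defs
  imports "HOL-Probability.Probability"
begin

definition c1 :: real where
  "c1 = integral {0..1} (\<lambda>u::real. min (2*u) (2 - 2*u) / (u + 1 / (exp 1 - 1)))"

definition log_convex_on :: "real set \<Rightarrow> (real \<Rightarrow> real) \<Rightarrow> bool" where
  "log_convex_on S f \<longleftrightarrow> (\<forall>x\<in>S. f x > 0) \<and> convex_on S (\<lambda>x. ln (f x))"

end

theory Submission imports Defs "HOL-Real_Asymp.Real_Asymp" begin

lemma pow_le_fact_exp:
  fixes y :: real assumes "0 \<le> y" shows "y ^ N \<le> fact N * exp y"
proof -
  have s: "(\<lambda>n. y^n /\<^sub>R fact n) sums exp y" by (rule exp_converges)
  have "y ^ N /\<^sub>R fact N \<le> exp y"
    using sum_le_suminf[OF sums_summable[OF s], of "{N}"] sums_unique[OF s] assms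
    by (simp add: divide_inverse)
  then show ?thesis by (simp add: field_simps)
qed

lemma tele_ineq:
  fixes x :: real assumes "0 \<le> x" shows "x * exp (-x) \<le> 2 * (exp (-x/2) - exp (-x))"
proof -
  obtain E where E: "E = exp (x/2)" by simp
  have "1 + x/2 \<le> E" unfolding E by (rule exp_ge_add_one_self)
  then have "x \<le> 2 * E - 2" by linarith
  then have "x \<le> 2 * (exp (x/2) - 1)" by (simp add: E right_diff_distrib)
  then have "x * exp (-x) \<le> 2 * (exp (x/2) - 1) * exp (-x)"
    by (intro mult_right_mono) auto
  also have "\<dots> = 2 * (exp (-x/2) - exp (-x))"
    by (simp add: algebra_simps flip: exp_add)
  finally show ?thesis .
qed

lemma tele_sum:
  fixes \<epsilon> S :: real assumes "\<epsilon> > 0" "S > 0"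
  shows "summable (\<lambda>k. (2^k*S) * exp (-\<epsilon>*(2^k*S)))"
    and "(\<Sum>k. (2^k*S) * exp (-\<epsilon>*(2^k*S))) \<le> 2/\<epsilon> * exp (-\<epsilon>*S/2)"
proof -
  define y :: "nat \<Rightarrow> real" where "y = (\<lambda>k. \<epsilon>*(2^k*S)/2)"
  have tm: "(2^k*S) * exp (-\<epsilon>*(2^k*S)) \<le> 2/\<epsilon> * (exp (- y k) - exp (- y (Suc k)))" for k
  proof -
    have "(\<epsilon>*(2^k*S)) * exp (-(\<epsilon>*(2^k*S))) \<le> 2 * (exp (-(\<epsilon>*(2^k*S))/2) - exp (-(\<epsilon>*(2^k*S))))"
      using assms by (intro tele_ineq) auto
    moreover have "y (Suc k) = \<epsilon>*(2^k*S)" by (simp add: y_def)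
    ultimately show ?thesis using assms
      by (simp add: y_def field_simps)
  qed
  have ps: "(\<Sum>k<n. (2^k*S) * exp (-\<epsilon>*(2^k*S))) \<le> 2/\<epsilon> * exp (-\<epsilon>*S/2)" for n
  proof -
    have "(\<Sum>k<n. (2^k*S) * exp (-\<epsilon>*(2^k*S))) \<le> (\<Sum>k<n. 2/\<epsilon> * (exp (- y k) - exp (- y (Suc k))))"
      by (intro sum_mono tm)
    also have "\<dots> = 2/\<epsilon> * (\<Sum>k<n. (exp (- y k) - exp (- y (Suc k))))"
      by (rule sum_distrib_left[symmetric])
    also have "\<dots> = 2/\<epsilon> * (exp (- y 0) - exp (- y n))"
      by (simp only: sum_lessThan_telescope'[of "\<lambda>k. exp (- y k)"])
    also have "\<dots> \<le> 2/\<epsilon> * exp (- y 0)" using assms by (simp add: field_simps)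
    finally show ?thesis by (simp add: y_def)
  qed
  show sm: "summable (\<lambda>k. (2^k*S) * exp (-\<epsilon>*(2^k*S)))"
    using assms by (intro summableI_nonneg_bounded[OF _ ps]) auto
  show "(\<Sum>k. (2^k*S) * exp (-\<epsilon>*(2^k*S))) \<le> 2/\<epsilon> * exp (-\<epsilon>*S/2)"
    by (rule suminf_le_const[OF sm ps])
qed

lemma c1_le_1: "c1 \<le> 1"
proof -
  let ?g = "\<lambda>u::real. min (2*u) (2 - 2*u) / (u + 1 / (exp 1 - 1))"
  have e3: "exp (1::real) \<le> 3" using exp_le by simp
  have e1: "exp (1::real) > 1" by simp
  have d: "1 / (exp 1 - 1) \<ge> (1/2::real)" using e3 e1 by (simp add: field_simps)
  have nz: "\<forall>u\<in>{0..1::real}. u + 1 / (exp 1 - 1) \<noteq> 0"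
  proof
    fix u :: real assume "u \<in> {0..1}" then have "u \<ge> 0" by auto
    then show "u + 1 / (exp 1 - 1) \<noteq> 0" using d by linarith
  qed
  have "continuous_on {0..1} ?g"
    using nz by (intro continuous_intros) auto
  then have int: "?g integrable_on {0..1}" by (rule integrable_continuous_interval)
  have "integral {0..1} ?g \<le> integral {0..1} (\<lambda>u::real. 1)"
  proof (rule integral_le[OF int])
    show "(\<lambda>u::real. 1) integrable_on {0..1}"
      by (rule integrable_const_ivl)
    fix u :: real assume u: "u \<in> {0..1}"
    have "min (2*u) (2 - 2*u) \<le> u + 1/2" using u by auto
    then have "min (2*u) (2 - 2*u) \<le> u + 1 / (exp 1 - 1)" using d by linarith
    moreover have "u \<ge> 0" using u by auto
    then have "u + 1 / (exp 1 - 1) > 0" using d by linarith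
    ultimately show "?g u \<le> 1" by (simp add: divide_le_eq_1)
  qed
  then show ?thesis by (simp add: c1_def)
qed


definition Fs :: "(nat \<Rightarrow> real) \<Rightarrow> (nat \<Rightarrow> real) \<Rightarrow> real \<Rightarrow> real" where
  "Fs c T t = (\<Sum>k. c k * exp (-(t-1)/T k))"

definition dens :: "(nat \<Rightarrow> real) \<Rightarrow> (nat \<Rightarrow> real) \<Rightarrow> real \<Rightarrow> ennreal" where
  "dens c T x = (\<Sum>k. ennreal (c k / T k * exp (-(x-1)/T k))) * indicator {1..} x"

lemma dens_meas[measurable]: "dens c T \<in> borel_measurable borel"
  unfolding dens_def by measurable

lemma summable_Fs:
  fixes c T :: "nat \<Rightarrow> real" and t :: real
  assumes c: "\<And>k. c k \<ge> 0" and T: "\<And>k. T k \<ge> 1" and s: "summable c" and t: "t \<ge> 1"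
  shows "summable (\<lambda>k. c k * exp (-(t-1)/T k))"
proof (rule summable_comparison_test[where g=c])
  show "summable c" by (rule s)
  show "\<exists>N. \<forall>n\<ge>N. norm (c n * exp (-(t-1)/T n)) \<le> c n"
  proof (intro exI allI impI)
    fix n :: nat
    have "T n > 0" using T[of n] by simp
    then have "exp (-(t-1)/T n) \<le> 1" using t by (simp add: divide_nonpos_pos)
    then show "norm (c n * exp (-(t-1)/T n)) \<le> c n"
      using c[of n] by (simp add: abs_mult mult_left_le)
  qed
qed

lemma term_int:
  fixes c T t :: real
  assumes c: "c \<ge> 0" and T: "T > 0"
  shows "(\<integral>\<^sup>+x. ennreal (c/T * exp (-(x-1)/T)) * indicator {t..} x \<partial>lborel) = ennreal (c * exp (-(t-1)/T))"
proof -
  have "(\<integral>\<^sup>+x. ennreal (c/T * exp (-(x-1)/T)) * indicator {t..} x \<partial>lborel) = ennreal (0 - (- c * exp (-(t-1)/T)))"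
  proof (rule nn_integral_FTC_atLeast)
    show "(\<lambda>x. c/T * exp (-(x-1)/T)) \<in> borel_measurable borel" by measurable
    fix x assume "t \<le> x"
    show "((\<lambda>x. - c * exp (-(x-1)/T)) has_real_derivative c/T * exp (-(x-1)/T)) (at x)"
      using T by (auto intro!: derivative_eq_intros simp: field_simps)
    show "0 \<le> c/T * exp (-(x-1)/T)" using c T by simp
  next
    show "((\<lambda>x. - c * exp (-(x-1)/T)) \<longlongrightarrow> 0) at_top"
      using T by real_asymp
  qed
  then show ?thesis by simp
qed


lemma emeasure_tail:
  fixes c T :: "nat \<Rightarrow> real" and t :: real
  assumes c: "\<And>k. c k \<ge> 0" and T: "\<And>k. T k \<ge> 1" and s: "summable c" and t: "t \<ge> 1"
  shows "emeasure (density lborel (dens c T)) {t..} = ennreal (Fs c T t)"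
proof -
  have "emeasure (density lborel (dens c T)) {t..} = (\<integral>\<^sup>+x. dens c T x * indicator {t..} x \<partial>lborel)"
    by (rule emeasure_density) auto
  also have "\<dots> = (\<integral>\<^sup>+x. (\<Sum>k. ennreal (c k / T k * exp (-(x-1)/T k)) * indicator {t..} x) \<partial>lborel)"
    by (rule nn_integral_cong) (use t in \<open>auto simp: dens_def split: split_indicator\<close>)
  also have "\<dots> = (\<Sum>k. \<integral>\<^sup>+x. ennreal (c k / T k * exp (-(x-1)/T k)) * indicator {t..} x \<partial>lborel)"
    by (rule nn_integral_suminf) measurable
  also have "\<dots> = (\<Sum>k. ennreal (c k * exp (-(t-1)/T k)))"
  proof (rule suminf_cong)
    fix k
    have "T k > 0" using T[of k] by simp
    then show "(\<integral>\<^sup>+x. ennreal (c k / T k * exp (-(x-1)/T k)) * indicator {t..} x \<partial>lborel) = ennreal (c k * exp (-(t-1)/T k))"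
      using c[of k] by (rule term_int[rotated])
  qed
  also have "\<dots> = ennreal (Fs c T t)"
    unfolding Fs_def using summable_Fs[OF c T s t] c by (intro suminf_ennreal2) auto
  finally show ?thesis .
qed

lemma key_pt:
  fixes x T p :: real and N :: nat
  assumes T: "T \<ge> 1" and x: "x \<ge> 1" and p: "0 < p" "p \<le> real N"
  shows "x powr p * exp (-(x-1)/(2*T)) \<le> 3 * (1 + 2^N * fact N) * T powr p"
proof -
  have Tp: "T > 0" using T by simp
  have A: "x powr p \<le> T powr p * (1 + (x/T)^N)"
  proof (cases "x \<le> T")
    case True
    then have "x powr p \<le> T powr p" using x p by (intro powr_mono2) auto
    also have "\<dots> \<le> T powr p * (1 + (x/T)^N)" using x Tp by simp
    finally show ?thesis .
  next
    case False
    then have xT: "x/T \<ge> 1" using Tp by simp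
    have eq: "x powr p = T powr p * (x/T) powr p" using Tp x by (subst powr_mult[symmetric]) auto
    have "(x/T) powr p \<le> (x/T) powr (real N)" using xT p by (intro powr_mono) auto
    also have "\<dots> = (x/T)^N" using xT by (simp add: powr_realpow)
    also have "\<dots> \<le> 1 + (x/T)^N" by simp
    finally have "(x/T) powr p \<le> 1 + (x/T)^N" .
    then show ?thesis unfolding eq by (intro mult_left_mono) auto
  qed
  define y where "y = x/(2*T)"
  have y0: "y \<ge> 0" using x Tp by (simp add: y_def)
  have xTy: "(x/T)^N = 2^N * y^N" by (simp add: y_def power_mult_distrib[symmetric])
  have E: "exp (-(x-1)/(2*T)) = exp (-y) * exp (1/(2*T))"
  proof -
    have "-(x-1)/(2*T) = -y + 1/(2*T)" using Tp by (simp add: y_def field_simps)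
    then show ?thesis by (simp only: exp_add mult.commute)
  qed
  have E2: "exp (1/(2*T)) \<le> 3"
  proof -
    have "1/(2*T) \<le> 1" using T by simp
    then have "exp (1/(2*T)) \<le> exp 1" by simp
    also have "\<dots> \<le> 3" using exp_le by simp
    finally show ?thesis .
  qed
  have B: "(1 + 2^N * y^N) * exp (-y) \<le> 1 + 2^N * fact N"
  proof -
    have "y^N * exp (-y) \<le> fact N"
      using pow_le_fact_exp[OF y0, of N] by (simp add: exp_minus field_simps)
    moreover have "exp (-y) \<le> 1" using y0 by simp
    ultimately have "exp (-y) + 2^N * (y^N * exp (-y)) \<le> 1 + 2^N * fact N"
      by (intro add_mono mult_left_mono) auto
    then show ?thesis by (simp add: algebra_simps)
  qed
  have "x powr p * exp (-(x-1)/(2*T)) \<le> T powr p * (1 + (x/T)^N) * exp (-(x-1)/(2*T))"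
    by (intro mult_right_mono A) simp
  also have "\<dots> = T powr p * ((1 + 2^N * y^N) * exp (-y)) * exp (1/(2*T))"
    unfolding xTy E by (simp only: mult_ac)
  also have "\<dots> \<le> T powr p * (1 + 2^N * fact N) * 3"
    by (intro mult_mono mult_left_mono B E2) (auto simp: y0)
  also have "\<dots> = 3 * (1 + 2^N * fact N) * T powr p" by (simp only: mult_ac)
  finally show ?thesis .
qed


lemma moment_bound:
  fixes c T :: "nat \<Rightarrow> real" and p :: real and N :: nat
  assumes c: "\<And>k. c k \<ge> 0" and T: "\<And>k. T k \<ge> 1"
    and p: "0 < p" "p \<le> real N" and sp: "summable (\<lambda>k. c k * T k powr p)"
  shows "(\<integral>\<^sup>+x. ennreal (x powr p) \<partial>density lborel (dens c T))
           \<le> ennreal (6 * (1 + 2^N * fact N) * (\<Sum>k. c k * T k powr p))"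
proof -
  define K where "K = 3 * (1 + 2^N * fact N :: real)"
  have K0: "K \<ge> 0" by (simp add: K_def)
  have "(\<integral>\<^sup>+x. ennreal (x powr p) \<partial>density lborel (dens c T)) = (\<integral>\<^sup>+x. dens c T x * ennreal (x powr p) \<partial>lborel)"
    by (rule nn_integral_density) auto
  also have "\<dots> = (\<integral>\<^sup>+x. (\<Sum>k. ennreal (c k / T k * exp (-(x-1)/T k) * x powr p) * indicator {1..} x) \<partial>lborel)"
  proof (rule nn_integral_cong)
    fix x :: real assume "x \<in> space lborel"
    have eq: "ennreal (c k / T k * exp (-(x-1)/T k) * x powr p) = ennreal (c k / T k * exp (-(x-1)/T k)) * ennreal (x powr p)" for k
      by (rule ennreal_mult'') simp
    show "dens c T x * ennreal (x powr p) = (\<Sum>k. ennreal (c k / T k * exp (-(x-1)/T k) * x powr p) * indicator {1..} x)"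
      unfolding dens_def eq ennreal_suminf_multc by (simp only: mult_ac ennreal_suminf_multc)
  qed
  also have "\<dots> = (\<Sum>k. \<integral>\<^sup>+x. ennreal (c k / T k * exp (-(x-1)/T k) * x powr p) * indicator {1..} x \<partial>lborel)"
    by (rule nn_integral_suminf) measurable
  also have "\<dots> \<le> (\<Sum>k. ennreal (2 * K * c k * T k powr p))"
  proof (intro suminf_le summableI)
    fix k
    have Tk: "T k > 0" using T[of k] by simp
    have "(\<integral>\<^sup>+x. ennreal (c k / T k * exp (-(x-1)/T k) * x powr p) * indicator {1..} x \<partial>lborel)
       \<le> (\<integral>\<^sup>+x. ennreal ((2 * K * c k * T k powr p) / (2 * T k) * exp (-(x-1)/(2 * T k))) * indicator {1..} x \<partial>lborel)"
    proof (intro nn_integral_mono)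
      fix x :: real
      show "ennreal (c k / T k * exp (-(x-1)/T k) * x powr p) * indicator {1..} x
         \<le> ennreal ((2 * K * c k * T k powr p) / (2 * T k) * exp (-(x-1)/(2 * T k))) * indicator {1..} x"
      proof (cases "x \<ge> 1")
        case True
        have kp: "x powr p * exp (-(x-1)/(2*T k)) \<le> K * T k powr p"
          unfolding K_def using key_pt[OF T True p] .
        have ee: "exp (-(x-1)/T k) = exp (-(x-1)/(2*T k)) * exp (-(x-1)/(2*T k))"
          by (simp add: exp_add[symmetric] field_simps)
        have "c k / T k * exp (-(x-1)/T k) * x powr p
            = c k / T k * exp (-(x-1)/(2*T k)) * (x powr p * exp (-(x-1)/(2*T k)))"
          unfolding ee by (simp only: mult_ac)
        also have "\<dots> \<le> c k / T k * exp (-(x-1)/(2*T k)) * (K * T k powr p)"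
          using c[of k] Tk by (intro mult_left_mono kp) auto
        also have "\<dots> = (2 * K * c k * T k powr p) / (2 * T k) * exp (-(x-1)/(2 * T k))"
          using Tk by (simp add: field_simps)
        finally show ?thesis using True by (simp add: ennreal_leI)
      qed simp
    qed
    also have "\<dots> = ennreal (2 * K * c k * T k powr p * exp (-(1-1)/(2 * T k)))"
      using c[of k] Tk K0 by (intro term_int) auto
    finally show "(\<integral>\<^sup>+x. ennreal (c k / T k * exp (-(x-1)/T k) * x powr p) * indicator {1..} x \<partial>lborel)
       \<le> ennreal (2 * K * c k * T k powr p)" by simp
  qed
  also have "\<dots> = (\<Sum>k. ennreal (2 * K * (c k * T k powr p)))" by (simp add: mult.assoc)
  also have "\<dots> = ennreal (\<Sum>k. 2 * K * (c k * T k powr p))"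
    using c K0 by (intro suminf_ennreal2 summable_mult sp) auto
  also have "\<dots> = ennreal (6 * (1 + 2^N * fact N) * (\<Sum>k. c k * T k powr p))"
    using suminf_mult[OF sp, of "2*K"] by (simp add: K_def)
  finally show ?thesis .
qed


lemma Fs_ge_term:
  fixes c T :: "nat \<Rightarrow> real" and t :: real
  assumes c: "\<And>k. c k \<ge> 0" and T: "\<And>k. T k \<ge> 1" and s: "summable c" and t: "t \<ge> 1"
  shows "c k * exp (-(t-1)/T k) \<le> Fs c T t"
  unfolding Fs_def using sum_le_suminf[OF summable_Fs[OF c T s t], of "{k}"] c by simp

lemma exp_powr_eq: "exp (a::real) powr r = exp (r * a)"
  by (simp add: powr_def)

lemma Fs_logconvex:
  fixes c T :: "nat \<Rightarrow> real"
  assumes c: "\<And>k. c k \<ge> 0" and T: "\<And>k. T k \<ge> 1" and s: "summable c" and c0: "c 0 > 0"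
  shows "log_convex_on {1..} (Fs c T)"
proof -
  have pos: "Fs c T t > 0" if "t \<ge> 1" for t
  proof -
    have "c 0 * exp (-(t-1)/T 0) > 0" using c0 by simp
    then show ?thesis using Fs_ge_term[of c T t 0, OF c T s that] by linarith
  qed
  have "convex_on {1..} (\<lambda>x. ln (Fs c T x))"
  proof (rule convex_onI)
    show "convex {1::real..}" by (rule convex_real_interval)
    fix u x y :: real assume u: "0 < u" "u < 1" and x: "x \<in> {1..}" and y: "y \<in> {1..}"
    then have x1: "x \<ge> 1" and y1: "y \<ge> 1" by auto
    define z where "z = (1 - u) * x + u * y"
    have "(1-u) * x \<ge> (1-u) * 1" using u x1 by (intro mult_left_mono) auto
    then have "(1-u) * x \<ge> 1 - u" by simp
    moreover have "u * y \<ge> u * 1" using u y1 by (intro mult_left_mono) auto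
    then have "u * y \<ge> u" by simp
    ultimately have z1: "z \<ge> 1" unfolding z_def by linarith
    define A where "A = Fs c T x"
    define B where "B = Fs c T y"
    have A0: "A > 0" "B > 0" using pos x1 y1 by (auto simp: A_def B_def)
    define M where "M = A powr (1-u) * B powr u"
    have M0: "M > 0" using A0 by (simp add: M_def)
    define a where "a k = exp (-(x-1)/T k)" for k
    define b where "b k = exp (-(y-1)/T k)" for k
    have sa: "summable (\<lambda>k. c k * a k)" unfolding a_def by (rule summable_Fs[OF c T s x1])
    have sb: "summable (\<lambda>k. c k * b k)" unfolding b_def by (rule summable_Fs[OF c T s y1])
    have sz: "summable (\<lambda>k. c k * exp (-(z-1)/T k))" by (rule summable_Fs[OF c T s z1])
    have sA: "A = (\<Sum>k. c k * a k)" by (simp add: A_def Fs_def a_def)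
    have sB: "B = (\<Sum>k. c k * b k)" by (simp add: B_def Fs_def b_def)
    have tm: "c k * exp (-(z-1)/T k) \<le> M * ((1-u)/A * (c k * a k) + u/B * (c k * b k))" for k
    proof -
      have Tk: "T k > 0" using T[of k] by simp
      have ak: "a k > 0" "b k > 0" by (auto simp: a_def b_def)
      have zz: "z - 1 = (1-u)*(x-1) + u*(y-1)" by (simp add: z_def algebra_simps)
      have "-(z-1)/T k = (1-u)*(-(x-1)/T k) + u*(-(y-1)/T k)"
        unfolding zz using Tk by (simp add: divide_simps) (simp add: algebra_simps)
      then have "exp (-(z-1)/T k) = a k powr (1-u) * b k powr u"
        unfolding a_def b_def exp_powr_eq by (simp add: exp_add)
      also have "\<dots> = M * ((a k / A) powr (1-u) * (b k / B) powr u)"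
      proof -
        have p1: "(a k / A) powr (1-u) = a k powr (1-u) / A powr (1-u)"
          by (rule powr_divide)
        have p2: "(b k / B) powr u = b k powr u / B powr u"
          by (rule powr_divide)
        have "A powr (1-u) > 0" "B powr u > 0" using A0 by auto
        then show ?thesis unfolding p1 p2 M_def by (simp add: divide_simps)
      qed
      also have "\<dots> \<le> M * ((1-u) * (a k / A) + u * (b k / B))"
        using A0 ak M0 u by (intro mult_left_mono Youngs_inequality_0) auto
      finally have "c k * exp (-(z-1)/T k) \<le> c k * (M * ((1-u) * (a k / A) + u * (b k / B)))"
        using c[of k] by (intro mult_left_mono) auto
      also have "c k * (M * ((1-u) * (a k / A) + u * (b k / B))) = M * ((1-u)/A * (c k * a k) + u/B * (c k * b k))"
        by (simp add: algebra_simps)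
      finally show ?thesis .
    qed
    have sx: "summable (\<lambda>k. (1-u)/A * (c k * a k))" by (rule summable_mult[OF sa])
    have sy: "summable (\<lambda>k. u/B * (c k * b k))" by (rule summable_mult[OF sb])
    have "Fs c T z = (\<Sum>k. c k * exp (-(z-1)/T k))" by (simp add: Fs_def)
    also have "\<dots> \<le> (\<Sum>k. M * ((1-u)/A * (c k * a k) + u/B * (c k * b k)))"
      by (intro suminf_le tm sz summable_mult summable_add sa sb)
    also have "(\<Sum>k. M * ((1-u)/A * (c k * a k) + u/B * (c k * b k))) = M * (\<Sum>k. (1-u)/A * (c k * a k) + u/B * (c k * b k))"
      by (rule suminf_mult) (intro summable_add sx sy)
    also have "\<dots> = M * ((\<Sum>k. (1-u)/A * (c k * a k)) + (\<Sum>k. u/B * (c k * b k)))"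
      by (simp only: suminf_add[OF sx sy])
    also have "\<dots> = M * ((1-u)/A * A + u/B * B)"
      by (simp only: suminf_mult[OF sa] suminf_mult[OF sb] sA[symmetric] sB[symmetric])
    also have "\<dots> = M" using A0 by simp
    finally have FM: "Fs c T z \<le> M" .
    have "ln (Fs c T z) \<le> ln M" using FM pos[OF z1] by simp
    also have "ln M = (1-u) * ln A + u * ln B" using A0 by (simp add: M_def ln_mult ln_powr)
    finally show "ln (Fs c T ((1 - u) *\<^sub>R x + u *\<^sub>R y)) \<le> (1 - u) * ln (Fs c T x) + u * ln (Fs c T y)"
      by (simp add: z_def A_def B_def)
  qed
  then show ?thesis unfolding log_convex_on_def using pos by auto
qed


lemma convex_on_cong':
  assumes "convex_on S f" "\<And>x. x \<in> S \<Longrightarrow> f x = g x"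
  shows "convex_on S g"
  using assms unfolding convex_on_def convex_def by (metis (no_types, lifting))

theorem proposition2p5:
  fixes \<alpha> \<rho> :: real and h :: "real \<Rightarrow> real"
  assumes alpha_pos: "\<alpha> > 0"
    and h_nonneg: "\<forall>t\<ge>0. h t \<ge> 0"
    and h_mono: "mono_on {0..} h"
    and h_lim: "filterlim h at_top at_top"
    and rho: "0 < \<rho>" "\<rho> < c1"
    and h_growth: "\<forall>\<^sub>F t in at_top. ln (h t) < \<rho> * min \<alpha> 1 * ln (ln t)"
  shows "\<exists>\<mu> :: real measure.
           prob_space \<mu> \<and> sets \<mu> = sets borel \<and>
           measure \<mu> {1..} = 1 \<and>
           log_convex_on {1..} (\<lambda>t. measure \<mu> {t..}) \<and>
           (\<exists>C>0. \<forall>p. 0 < p \<and> p < \<alpha> \<longrightarrow>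
              (\<integral>\<^sup>+ x. ennreal (x powr p) \<partial>\<mu>) \<le> ennreal (C / (\<alpha> - p))) \<and>
           Limsup at_top (\<lambda>t. ereal (t powr \<alpha> * measure \<mu> {t..} / h t)) \<ge> 1"
proof -
  define r where "r = \<rho> * min \<alpha> 1"
  have r0: "r \<ge> 0" using rho alpha_pos by (simp add: r_def)
  have "min \<alpha> 1 \<le> 1" by simp
  then have "r \<le> \<rho>" using rho unfolding r_def by (simp add: mult_left_le)
  then have r1: "r \<le> 1" using rho c1_le_1 by linarith
  have ev1: "\<forall>\<^sub>F t in at_top. 0 < h t" using h_lim filterlim_at_top_dense by blast
  have ev2: "\<forall>\<^sub>F t in at_top. exp 1 \<le> (t::real)" by (rule eventually_ge_at_top)
  have "\<forall>\<^sub>F t in at_top. 0 < h t \<and> h t < ln t"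
    using ev1 ev2 h_growth
  proof eventually_elim
    case (elim t)
    have t0: "t > 0" using elim(2) by (smt (verit) exp_gt_zero)
    have "ln (exp 1) \<le> ln t" using elim(2) t0 by (subst ln_le_cancel_iff) auto
    then have lt1: "ln t \<ge> 1" by simp
    then have "ln (ln t) \<ge> 0" by simp
    then have "r * ln (ln t) \<le> ln (ln t)" using r1 r0 by (simp add: mult_left_le_one_le)
    then have "ln (h t) < ln (ln t)" using elim(3) unfolding r_def by linarith
    then show ?case using elim(1) lt1 by simp
  qed
  then obtain N0 where N0: "\<And>t. t \<ge> N0 \<Longrightarrow> 0 < h t \<and> h t < ln t"
    unfolding eventually_at_top_linorder by blast
  define S where "S = max 1 (max (ln (max N0 1)) (2/\<alpha> * ln (4*exp 1/\<alpha>)))"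
  have S1: "S \<ge> 1" by (simp add: S_def)
  have Sl: "ln (max N0 1) \<le> S" by (simp add: S_def)
  have "max N0 1 = exp (ln (max N0 1))" by simp
  also have "\<dots> \<le> exp S" using Sl by (simp only: exp_le_cancel_iff)
  finally have SN0: "exp S \<ge> N0" by simp
  have "\<alpha> * S / 2 \<ge> \<alpha> * (2/\<alpha> * ln (4*exp 1/\<alpha>)) / 2"
    using alpha_pos unfolding S_def by (intro divide_right_mono mult_left_mono) auto
  then have "\<alpha> * S / 2 \<ge> ln (4*exp 1/\<alpha>)" using alpha_pos by simp
  then have "exp (\<alpha> * S / 2) \<ge> 4*exp 1/\<alpha>"
    using alpha_pos by (metis exp_ln exp_le_cancel_iff divide_pos_pos exp_gt_zero mult_pos_pos zero_less_numeral)
  then have expS: "exp (-\<alpha> * S / 2) \<le> \<alpha> / (4 * exp 1)"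
    using alpha_pos by (simp add: exp_minus field_simps)
  define s where "s k = 2^k * S" for k :: nat
  define Tt where "Tt k = exp (s k)" for k
  have sS: "s k \<ge> S" for k
  proof -
    have "(1::real) \<le> 2^k" by simp
    then show ?thesis unfolding s_def using S1 by (simp add: mult_le_cancel_right1)
  qed
  have Tt1: "Tt k \<ge> 1" for k using sS[of k] S1 by (simp add: Tt_def)
  have hT: "0 < h (Tt k) \<and> h (Tt k) < s k" for k
  proof -
    have "Tt k \<ge> exp S" using sS[of k] by (simp add: Tt_def)
    then have "Tt k \<ge> N0" using SN0 by linarith
    then have "0 < h (Tt k) \<and> h (Tt k) < ln (Tt k)" by (rule N0)
    then show ?thesis by (simp add: Tt_def)
  qed
  define a where "a k = exp 1 * h (Tt k) * exp (-\<alpha> * s k)" for k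
  have a0: "a k \<ge> 0" for k using hT[of k] by (simp add: a_def less_imp_le)
  have TS: "summable (\<lambda>k. s k * exp (- \<epsilon> * s k))" and TS2: "(\<Sum>k. s k * exp (- \<epsilon> * s k)) \<le> 2/\<epsilon> * exp (-\<epsilon>*S/2)"
    if "\<epsilon> > 0" for \<epsilon>
    using tele_sum[OF that, of S] S1 unfolding s_def by auto
  have aB: "a k \<le> exp 1 * (s k * exp (-\<alpha> * s k))" for k
    using hT[of k] unfolding a_def mult.assoc by (intro mult_right_mono mult_left_mono) auto
  have sa: "summable a"
    by (rule summable_comparison_test[where g="\<lambda>k. exp 1 * (s k * exp (-\<alpha> * s k))"])
       (use a0 aB TS[OF alpha_pos] in \<open>auto intro: summable_mult\<close>)
  define A where "A = suminf a"
  have A0: "A \<ge> 0" unfolding A_def using a0 sa by (simp add: suminf_nonneg)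
  have "A \<le> (\<Sum>k. exp 1 * (s k * exp (-\<alpha> * s k)))"
    unfolding A_def by (intro suminf_le aB sa summable_mult TS alpha_pos)
  also have "\<dots> = exp 1 * (\<Sum>k. s k * exp (-\<alpha> * s k))"
    by (intro suminf_mult TS alpha_pos)
  also have "\<dots> \<le> exp 1 * (2/\<alpha> * exp (-\<alpha>*S/2))"
    by (intro mult_left_mono TS2 alpha_pos) auto
  also have "\<dots> \<le> exp 1 * (2/\<alpha> * (\<alpha> / (4 * exp 1)))"
    using expS alpha_pos by (intro mult_left_mono) auto
  also have "\<dots> = 1/2" using alpha_pos by (simp add: field_simps)
  finally have A2: "A \<le> 1/2" .
  define c where "c k = (if k = 0 then 1 - A else a (k - 1))" for k
  define T where "T k = (if k = 0 then 1 else Tt (k - 1))" for k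
  have c0: "\<And>k. c k \<ge> 0" using a0 A2 by (simp add: c_def)
  have T1: "\<And>k. T k \<ge> 1" using Tt1 by (simp add: T_def)
  have cpos: "c 0 > 0" using A2 by (simp add: c_def)
  have cS: "(\<lambda>k. c (Suc k)) = a" by (simp add: c_def)
  have sc: "summable c" using sa summable_Suc_iff[of c] cS by simp
  have sumc: "suminf c = 1"
    using suminf_split_head[OF sc] cS by (simp add: A_def[symmetric] c_def)
  define \<mu> where "\<mu> = density lborel (dens c T)"
  have tail: "measure \<mu> {t..} = Fs c T t" if "t \<ge> 1" for t
  proof -
    have "Fs c T t \<ge> 0" unfolding Fs_def
      using summable_Fs[OF c0 T1 sc that] c0 by (intro suminf_nonneg) auto
    then show ?thesis
      unfolding measure_def \<mu>_def emeasure_tail[OF c0 T1 sc that] by simp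
  qed
  have F1: "Fs c T 1 = 1" using sumc by (simp add: Fs_def)
  have em1: "emeasure \<mu> {1..} = 1"
    unfolding \<mu>_def emeasure_tail[OF c0 T1 sc order_refl] F1 by simp
  have "emeasure \<mu> (space \<mu>) = emeasure \<mu> {1..}"
  proof -
    have "emeasure \<mu> (space \<mu>) = (\<integral>\<^sup>+x. dens c T x * indicator UNIV x \<partial>lborel)"
      unfolding \<mu>_def by (subst emeasure_density) auto
    also have "\<dots> = (\<integral>\<^sup>+x. dens c T x * indicator {1..} x \<partial>lborel)"
      by (rule nn_integral_cong) (auto simp: dens_def split: split_indicator)
    also have "\<dots> = emeasure \<mu> {1..}"
      unfolding \<mu>_def by (subst emeasure_density) auto
    finally show ?thesis .
  qed
  then have prob: "prob_space \<mu>" using em1 by (intro prob_spaceI) simp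
  have sets: "sets \<mu> = sets borel" by (simp add: \<mu>_def)
  have meas1: "measure \<mu> {1..} = 1" using tail[of 1] F1 by simp
  have lc: "log_convex_on {1..} (\<lambda>t. measure \<mu> {t..})"
  proof -
    have "log_convex_on {1..} (Fs c T)" by (rule Fs_logconvex[OF c0 T1 sc cpos])
    then show ?thesis unfolding log_convex_on_def
      using tail by (auto intro: convex_on_cong')
  qed
  define N where "N = nat \<lceil>\<alpha>\<rceil>"
  define C where "C = 6 * (1 + 2^N * fact N) * (\<alpha> + 2 * exp 1)"
  have Cpos: "C > 0" using alpha_pos by (simp add: C_def add_pos_pos)
  have mom: "(\<integral>\<^sup>+ x. ennreal (x powr p) \<partial>\<mu>) \<le> ennreal (C / (\<alpha> - p))" if p: "0 < p" "p < \<alpha>" for p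
  proof -
    define \<epsilon> where "\<epsilon> = \<alpha> - p"
    have e0: "\<epsilon> > 0" using p by (simp add: \<epsilon>_def)
    have pN: "p \<le> real N" unfolding N_def using p by linarith
    have bd: "a k * Tt k powr p \<le> exp 1 * (s k * exp (-\<epsilon> * s k))" for k
    proof -
      have "-\<epsilon> * s k = -\<alpha> * s k + p * s k" by (simp add: \<epsilon>_def algebra_simps)
      then have e: "exp (-\<alpha> * s k) * exp (p * s k) = exp (-\<epsilon> * s k)" by (simp only: exp_add)
      have "a k * Tt k powr p = exp 1 * (h (Tt k) * (exp (-\<alpha> * s k) * exp (p * s k)))"
        unfolding a_def Tt_def exp_powr_eq by (simp only: mult_ac)
      also have "\<dots> = exp 1 * (h (Tt k) * exp (-\<epsilon> * s k))" by (simp only: e)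
      finally have "a k * Tt k powr p = exp 1 * (h (Tt k) * exp (-\<epsilon> * s k))" .
      also have "\<dots> \<le> exp 1 * (s k * exp (-\<epsilon> * s k))"
        using hT[of k] by (intro mult_left_mono mult_right_mono) auto
      finally show ?thesis .
    qed
    have bd0: "a k * Tt k powr p \<ge> 0" for k using a0[of k] by simp
    have sap: "summable (\<lambda>k. a k * Tt k powr p)"
      by (rule summable_comparison_test[where g="\<lambda>k. exp 1 * (s k * exp (-\<epsilon> * s k))"])
         (use bd bd0 TS[OF e0] in \<open>auto intro: summable_mult\<close>)
    have cS2: "(\<lambda>k. c (Suc k) * T (Suc k) powr p) = (\<lambda>k. a k * Tt k powr p)"
      by (simp add: c_def T_def)
    have scp: "summable (\<lambda>k. c k * T k powr p)"
      using sap summable_Suc_iff[of "\<lambda>k. c k * T k powr p"] cS2 by simp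
    have "(\<Sum>k. a k * Tt k powr p) \<le> (\<Sum>k. exp 1 * (s k * exp (-\<epsilon> * s k)))"
      by (intro suminf_le bd sap summable_mult TS e0)
    also have "\<dots> = exp 1 * (\<Sum>k. s k * exp (-\<epsilon> * s k))"
      by (intro suminf_mult TS e0)
    also have "\<dots> \<le> exp 1 * (2/\<epsilon> * exp (-\<epsilon>*S/2))"
      by (intro mult_left_mono TS2 e0) auto
    also have "\<dots> \<le> exp 1 * (2/\<epsilon> * 1)"
      using e0 S1 by (intro mult_left_mono) auto
    finally have sum1: "(\<Sum>k. a k * Tt k powr p) \<le> 2 * exp 1 / \<epsilon>" by (simp add: mult.commute)
    have "(\<Sum>k. c k * T k powr p) = c 0 * T 0 powr p + (\<Sum>k. a k * Tt k powr p)"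
      using suminf_split_head[OF scp] cS2 by simp
    also have "\<dots> \<le> 1 + 2 * exp 1 / \<epsilon>"
      using sum1 A0 by (simp add: c_def T_def)
    also have "\<dots> \<le> (\<alpha> + 2 * exp 1) / \<epsilon>"
    proof -
      have "1 \<le> \<alpha> / \<epsilon>" using e0 p by (simp add: \<epsilon>_def)
      then show ?thesis by (simp add: add_divide_distrib)
    qed
    finally have sumc: "(\<Sum>k. c k * T k powr p) \<le> (\<alpha> + 2 * exp 1) / \<epsilon>" .
    have "(\<integral>\<^sup>+ x. ennreal (x powr p) \<partial>\<mu>) \<le> ennreal (6 * (1 + 2^N * fact N) * (\<Sum>k. c k * T k powr p))"
      unfolding \<mu>_def by (rule moment_bound[OF c0 T1 p(1) pN scp])
    also have "\<dots> \<le> ennreal (6 * (1 + 2^N * fact N) * ((\<alpha> + 2 * exp 1) / \<epsilon>))"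
      by (intro ennreal_leI mult_left_mono sumc) auto
    also have "\<dots> = ennreal (C / (\<alpha> - p))" by (simp add: C_def \<epsilon>_def)
    finally show ?thesis .
  qed
  have atT: "1 \<le> Tt k powr \<alpha> * measure \<mu> {Tt k..} / h (Tt k)" for k
  proof -
    have hp: "h (Tt k) > 0" using hT by auto
    have "a k * exp (-(Tt k - 1)/Tt k) \<le> Fs c T (Tt k)"
      using Fs_ge_term[of c T "Tt k" "Suc k", OF c0 T1 sc Tt1] by (simp add: c_def T_def)
    moreover have "exp (-1) \<le> exp (-(Tt k - 1)/Tt k)"
      using Tt1[of k] by (simp add: field_simps)
    ultimately have "a k * exp (-1) \<le> measure \<mu> {Tt k..}"
      using tail[OF Tt1[of k]] a0[of k] by (smt (verit) mult_left_mono)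
    then have "Tt k powr \<alpha> * (a k * exp (-1)) \<le> Tt k powr \<alpha> * measure \<mu> {Tt k..}"
      by (intro mult_left_mono) auto
    moreover have "Tt k powr \<alpha> * (a k * exp (-1)) = h (Tt k)"
      unfolding a_def Tt_def exp_powr_eq
      by (simp add: mult_exp_exp[symmetric] algebra_simps exp_minus field_simps)
    ultimately show ?thesis using hp by (simp add: divide_simps)
  qed
  have lim: "Limsup at_top (\<lambda>t. ereal (t powr \<alpha> * measure \<mu> {t..} / h t)) \<ge> 1"
    unfolding Limsup_def
  proof (rule INF_greatest)
    fix P :: "real \<Rightarrow> bool" assume "P \<in> {P. eventually P at_top}"
    then obtain N1 where N1: "\<And>t. t \<ge> N1 \<Longrightarrow> P t" by (auto simp: eventually_at_top_linorder)
    define k where "k = nat \<lceil>N1\<rceil>"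
    have "N1 \<le> real k" unfolding k_def by linarith
    also have "\<dots> \<le> 2^k" using of_nat_less_two_power[of k, where 'a=real] by linarith
    also have "\<dots> \<le> s k" unfolding s_def using S1 by simp
    also have "\<dots> \<le> Tt k" unfolding Tt_def by (smt (verit) exp_ge_add_one_self)
    finally have "P (Tt k)" by (rule N1)
    then show "1 \<le> (SUP t\<in>{t. P t}. ereal (t powr \<alpha> * measure \<mu> {t..} / h t))"
      using atT[of k] by (intro SUP_upper2[where i="Tt k"]) auto
  qed
  show ?thesis
    using prob sets meas1 lc mom Cpos lim by blast
qed

end
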